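(* Let $M$ be an $\mathbf{FB}$-module and $\phi$ a symmetric operation on $M$. Then $\phi$ satisfies condition (B3) if and only if it satisfies (B3$'$): $\phi[n]=(-1)^{n+1}\phi[1]$ for all $n\ge1$.
   Context: $k$ is a commutative ring; $\mathbf{FB}$-modules are functors from finite sets and bijections to $k$-modules. A symmetric operation $\phi$ on $M$ assigns to each finite set $S$ and subsets $A,B\subseteq S$ a linear map $\phi^S_{A,B}:M(S\setminus B)\to M(S\setminus A)$, natural with respect to bijections. For $n\in\mathbb N$, $\phi[n]$ is the family defined for disjoint $A,B\subseteq S$ by $\phi[n]^S_{A,B}=\phi^{S\sqcup[n]}_{A\sqcup[n],B\sqcup[n]}$, where $[n]=\{1,\dots,n\}$ is taken disjoint from $S$. Condition (B3): for every finite set $S$ and subsets $A,B,C,D\subseteq S$ with $A\cap B=\emptyset$, $C\cap D=\emptyset$, $A\cap C\ne\emptyset$ and $B\cap D\ne\emptyset$, $\sum_{X\subseteq B\cap D}\phi^{S\setminus X}_{(D\setminus X)\cup C,\,A\cup(B\setminus X)}=\sum_{X\subseteq A\cap C}\phi^{S\setminus X}_{(C\setminus X)\cup D,\,B\cup(A\setminus X)}$. *)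

theory Defs
  imports Complex_Main
begin

definition lin_on :: "('k::comm_ring_1 \<Rightarrow> 'v::ab_group_add \<Rightarrow> 'v) \<Rightarrow> 'v set \<Rightarrow> 'v set \<Rightarrow> ('v \<Rightarrow> 'v) \<Rightarrow> bool" where
  "lin_on s V W f \<longleftrightarrow> (\<forall>x\<in>V. f x \<in> W) \<and> (\<forall>x\<in>V. \<forall>y\<in>V. f (x + y) = f x + f y)
     \<and> (\<forall>c. \<forall>x\<in>V. f (s c x) = s c (f x))"

text \<open>An FB-module: finite sets S of labels (type 'a) are sent to k-modules M S
  (submodules of an ambient k-module 'v); a bijection f : S -> T acts by act f S.\<close>
definition FB_module :: "('k::comm_ring_1 \<Rightarrow> 'v::ab_group_add \<Rightarrow> 'v) \<Rightarrow> ('a set \<Rightarrow> 'v set)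
    \<Rightarrow> (('a \<Rightarrow> 'a) \<Rightarrow> 'a set \<Rightarrow> 'v \<Rightarrow> 'v) \<Rightarrow> bool" where
  "FB_module s M act \<longleftrightarrow> module s
     \<and> (\<forall>S. finite S \<longrightarrow> module.subspace s (M S))
     \<and> (\<forall>f S T. finite S \<and> bij_betw f S T \<longrightarrow> lin_on s (M S) (M T) (act f S))
     \<and> (\<forall>S x. finite S \<and> x \<in> M S \<longrightarrow> act id S x = x)
     \<and> (\<forall>f g S T U x. finite S \<and> bij_betw f S T \<and> bij_betw g T U \<and> x \<in> M S
            \<longrightarrow> act (g \<circ> f) S x = act g T (act f S x))
     \<and> (\<forall>f g S x. finite S \<and> (\<forall>a\<in>S. f a = g a) \<and> x \<in> M S \<longrightarrow> act f S x = act g S x)"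

definition symmetric_operation :: "('k::comm_ring_1 \<Rightarrow> 'v::ab_group_add \<Rightarrow> 'v) \<Rightarrow> ('a set \<Rightarrow> 'v set)
    \<Rightarrow> (('a \<Rightarrow> 'a) \<Rightarrow> 'a set \<Rightarrow> 'v \<Rightarrow> 'v) \<Rightarrow> ('a set \<Rightarrow> 'a set \<Rightarrow> 'a set \<Rightarrow> 'v \<Rightarrow> 'v) \<Rightarrow> bool" where
  "symmetric_operation s M act phi \<longleftrightarrow>
     (\<forall>S A B. finite S \<and> A \<subseteq> S \<and> B \<subseteq> S \<longrightarrow> lin_on s (M (S - B)) (M (S - A)) (phi S A B))
   \<and> (\<forall>f S T A B x. finite S \<and> bij_betw f S T \<and> A \<subseteq> S \<and> B \<subseteq> S \<and> x \<in> M (S - B)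
        \<longrightarrow> act f (S - A) (phi S A B x) = phi T (f ` A) (f ` B) (act f (S - B) x))"

definition fresh_set :: "'a set \<Rightarrow> nat \<Rightarrow> 'a set" where
  "fresh_set S n = (SOME T. finite T \<and> card T = n \<and> S \<inter> T = {})"

definition phi_shift :: "('a set \<Rightarrow> 'a set \<Rightarrow> 'a set \<Rightarrow> 'v \<Rightarrow> 'v) \<Rightarrow> nat \<Rightarrow> 'a set \<Rightarrow> 'a set \<Rightarrow> 'a set \<Rightarrow> 'v \<Rightarrow> 'v" where
  "phi_shift phi n S A B = phi (S \<union> fresh_set S n) (A \<union> fresh_set S n) (B \<union> fresh_set S n)"

definition cond_B3 :: "('a set \<Rightarrow> 'v::ab_group_add set) \<Rightarrow> ('a set \<Rightarrow> 'a set \<Rightarrow> 'a set \<Rightarrow> 'v \<Rightarrow> 'v) \<Rightarrow> bool" where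
  "cond_B3 M phi \<longleftrightarrow>
    (\<forall>S A B C D. finite S \<and> A \<subseteq> S \<and> B \<subseteq> S \<and> C \<subseteq> S \<and> D \<subseteq> S \<and> A \<inter> B = {} \<and> C \<inter> D = {}
       \<and> A \<inter> C \<noteq> {} \<and> B \<inter> D \<noteq> {} \<longrightarrow>
       (\<forall>x \<in> M (S - (A \<union> B)).
          (\<Sum>X\<in>Pow (B \<inter> D). phi (S - X) ((D - X) \<union> C) (A \<union> (B - X)) x)
        = (\<Sum>X\<in>Pow (A \<inter> C). phi (S - X) ((C - X) \<union> D) (B \<union> (A - X)) x)))"

definition cond_B3' :: "('k::comm_ring_1 \<Rightarrow> 'v::ab_group_add \<Rightarrow> 'v) \<Rightarrow> ('a set \<Rightarrow> 'v set)
    \<Rightarrow> ('a set \<Rightarrow> 'a set \<Rightarrow> 'a set \<Rightarrow> 'v \<Rightarrow> 'v) \<Rightarrow> bool" where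
  "cond_B3' s M phi \<longleftrightarrow>
    (\<forall>n\<ge>1. \<forall>S A B. finite S \<and> A \<subseteq> S \<and> B \<subseteq> S \<and> A \<inter> B = {} \<longrightarrow>
       (\<forall>x \<in> M (S - B). phi_shift phi n S A B x = s ((-1) ^ (n + 1)) (phi_shift phi 1 S A B x)))"

end

theory Submission
  imports Defs
begin

lemma fresh_set_prop:
  assumes "infinite (UNIV :: 'a set)" "finite (S :: 'a set)"
  shows "finite (fresh_set S n) \<and> card (fresh_set S n) = n \<and> S \<inter> fresh_set S n = {}"
proof -
  have "infinite (UNIV - S)" using assms Diff_infinite_finite by blast
  then obtain T where "finite T" "card T = n" "T \<subseteq> UNIV - S"
    using infinite_arbitrarily_large by blast
  then have "\<exists>T. finite T \<and> card T = n \<and> S \<inter> T = {}" by blast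
  then show ?thesis unfolding fresh_set_def by (rule someI_ex)
qed

lemma relabel:
  assumes FB: "FB_module s M act" and SO: "symmetric_operation s M act phi"
    and fin: "finite T" and UT: "U \<subseteq> T" and VT: "V \<subseteq> T"
    and finF: "finite F" and cardF: "card F = card (U \<inter> V)"
    and disj: "F \<inter> (T - (U \<inter> V)) = {}" and x: "x \<in> M (T - V)"
  shows "phi T U V x = phi ((T - (U \<inter> V)) \<union> F) ((U - (U \<inter> V)) \<union> F) ((V - (U \<inter> V)) \<union> F) x"
proof -
  let ?I = "U \<inter> V"
  have finI: "finite ?I" by (rule finite_subset[OF _ fin]) (use UT in auto)
  obtain g where g: "bij_betw g ?I F" using finite_same_card_bij[OF finI finF] cardF by metis
  define f where "f = (\<lambda>a. if a \<in> ?I then g a else a)"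
  have b1: "bij_betw f (T - ?I) (T - ?I)"
    by (rule bij_betw_cong[THEN iffD2, of _ _ id]) (auto simp: f_def)
  have b2: "bij_betw f ?I F"
    by (rule bij_betw_cong[THEN iffD2, OF _ g]) (auto simp: f_def)
  have "bij_betw f ((T - ?I) \<union> ?I) ((T - ?I) \<union> F)"
    by (rule bij_betw_combine[OF b1 b2]) (use disj in auto)
  moreover have "(T - ?I) \<union> ?I = T" using UT by auto
  ultimately have bf: "bij_betw f T ((T - ?I) \<union> F)" by simp
  have gI: "g ` ?I = F" using g bij_betw_imp_surj_on by blast
  have fU: "f ` U = (U - ?I) \<union> F"
  proof -
    have "U = (U - ?I) \<union> ?I" by auto
    then have "f ` U = f ` (U - ?I) \<union> f ` ?I" by (metis image_Un)
    also have "f ` (U - ?I) = U - ?I" by (auto simp: f_def)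
    also have "f ` ?I = g ` ?I" by (auto simp: f_def)
    finally show ?thesis using gI by simp
  qed
  have fV: "f ` V = (V - ?I) \<union> F"
  proof -
    have "V = (V - ?I) \<union> ?I" by auto
    then have "f ` V = f ` (V - ?I) \<union> f ` ?I" by (metis image_Un)
    also have "f ` (V - ?I) = V - ?I" by (auto simp: f_def)
    also have "f ` ?I = g ` ?I" by (auto simp: f_def)
    finally show ?thesis using gI by simp
  qed
  have natAll: "\<forall>f S T A B x. finite S \<and> bij_betw f S T \<and> A \<subseteq> S \<and> B \<subseteq> S \<and> x \<in> M (S - B)
        \<longrightarrow> act f (S - A) (phi S A B x) = phi T (f ` A) (f ` B) (act f (S - B) x)"
    using SO unfolding symmetric_operation_def by (elim conjE) assumption
  have nat: "act f (T - U) (phi T U V x) = phi ((T - ?I) \<union> F) (f ` U) (f ` V) (act f (T - V) x)"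
    using natAll[rule_format, OF conjI[OF fin conjI[OF bf conjI[OF UT conjI[OF VT x]]]]] .
  have actid: "act f (T - W) y = y" if "y \<in> M (T - W)" "?I \<subseteq> W" for W y
  proof -
    have cg: "\<forall>f g S x. finite S \<and> (\<forall>a\<in>S. f a = g a) \<and> x \<in> M S \<longrightarrow> act f S x = act g S x"
      using FB unfolding FB_module_def by (elim conjE) assumption
    have idl: "\<forall>S x. finite S \<and> x \<in> M S \<longrightarrow> act id S x = x"
      using FB unfolding FB_module_def by (elim conjE) assumption
    have "\<forall>a\<in>T - W. f a = id a" using that by (auto simp: f_def)
    then have "act f (T - W) y = act id (T - W) y"
      using cg[rule_format, of "T - W" f id y] fin that by blast
    also have "\<dots> = y" using idl[rule_format, of "T - W" y] fin that by blast
    finally show ?thesis .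
  qed
  have linAll: "\<forall>S A B. finite S \<and> A \<subseteq> S \<and> B \<subseteq> S \<longrightarrow> lin_on s (M (S - B)) (M (S - A)) (phi S A B)"
    using SO unfolding symmetric_operation_def by (elim conjE) assumption
  have "lin_on s (M (T - V)) (M (T - U)) (phi T U V)" using linAll fin UT VT by blast
  then have mem: "phi T U V x \<in> M (T - U)" using x unfolding lin_on_def by blast
  have e1: "act f (T - U) (phi T U V x) = phi T U V x" by (rule actid[OF mem]) auto
  have e2: "act f (T - V) x = x" by (rule actid[OF x]) auto
  show ?thesis using nat e1 e2 fU fV by simp
qed

lemma shiftG:
  assumes inf: "infinite (UNIV :: 'a set)"
    and FB: "FB_module s M act" and SO: "symmetric_operation s M act phi"
    and fin: "finite (S :: 'a set)" and US: "U \<subseteq> S" and VS: "V \<subseteq> S"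
    and X: "X \<subseteq> U \<inter> V" and x: "x \<in> M (S - V)"
  shows "phi (S - X) (U - X) (V - X) x
       = phi_shift phi (card (U \<inter> V) - card X) (S - (U \<inter> V)) (U - V) (V - U) x"
proof -
  define n where "n = card (U \<inter> V) - card X"
  define F where "F = fresh_set (S - (U \<inter> V)) n"
  have finS0: "finite (S - (U \<inter> V))" using fin by simp
  have Fp: "finite F" "card F = n" "(S - (U \<inter> V)) \<inter> F = {}"
    using fresh_set_prop[OF inf finS0, of n] unfolding F_def by auto
  have finUV: "finite (U \<inter> V)" by (rule finite_subset[OF _ fin]) (use US in auto)
  have IX: "(U - X) \<inter> (V - X) = (U \<inter> V) - X" by auto
  have cI: "card ((U - X) \<inter> (V - X)) = n"
    unfolding IX n_def by (rule card_Diff_subset[OF finite_subset[OF X finUV] X])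
  have xm: "x \<in> M ((S - X) - (V - X))"
  proof -
    have "(S - X) - (V - X) = S - V" using X by auto
    then show ?thesis using x by simp
  qed
  have "phi (S - X) (U - X) (V - X) x
      = phi ((S - X) - ((U - X) \<inter> (V - X)) \<union> F) ((U - X) - ((U - X) \<inter> (V - X)) \<union> F)
            ((V - X) - ((U - X) \<inter> (V - X)) \<union> F) x"
    apply (rule relabel[OF FB SO])
    using fin US VS Fp cI xm X by auto
  also have "(S - X) - ((U - X) \<inter> (V - X)) = S - (U \<inter> V)" using X by auto
  also have "(U - X) - ((U - X) \<inter> (V - X)) = U - V" using X by auto
  also have "(V - X) - ((U - X) \<inter> (V - X)) = V - U" using X by auto
  finally show ?thesis unfolding phi_shift_def F_def n_def .
qed

lemma sum_pairs_zero:
  fixes f :: "'a set \<Rightarrow> 'v::ab_group_add"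
  assumes "finite P" "p \<in> P" "\<And>X. X \<subseteq> P - {p} \<Longrightarrow> f (insert p X) = - f X"
  shows "sum f (Pow P) = 0"
proof -
  define Q where "Q = P - {p}"
  have P: "P = insert p Q" "p \<notin> Q" "finite Q" using assms unfolding Q_def by auto
  have "sum f (Pow P) = sum f (Pow Q \<union> insert p ` Pow Q)" using P Pow_insert by metis
  also have "\<dots> = sum f (Pow Q) + sum f (insert p ` Pow Q)"
    by (rule sum.union_disjoint) (use P in auto)
  also have "sum f (insert p ` Pow Q) = sum (f \<circ> insert p) (Pow Q)"
  proof (rule sum.reindex)
    show "inj_on (insert p) (Pow Q)"
    proof (rule inj_onI)
      fix x y assume "x \<in> Pow Q" "y \<in> Pow Q" "insert p x = insert p y"
      then have "p \<notin> x" "p \<notin> y" using P by auto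
      then show "x = y" using \<open>insert p x = insert p y\<close> by (metis Diff_insert_absorb)
    qed
  qed
  also have "\<dots> = sum (\<lambda>X. - f X) (Pow Q)"
    by (rule sum.cong) (use assms(3) Q_def in auto)
  also have "\<dots> = - sum f (Pow Q)" by (simp add: sum_negf)
  finally show ?thesis by simp
qed

lemma termL:
  assumes inf: "infinite (UNIV :: 'a set)"
    and FB: "FB_module s M act" and SO: "symmetric_operation s M act phi"
    and fin: "finite (S :: 'a set)" and sub: "A \<subseteq> S" "B \<subseteq> S" "C \<subseteq> S" "D \<subseteq> S"
    and AB: "A \<inter> B = {}" and CD: "C \<inter> D = {}"
    and X: "X \<subseteq> B \<inter> D" and x: "x \<in> M (S - (A \<union> B))"
  shows "phi (S - X) ((D - X) \<union> C) (A \<union> (B - X)) x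
       = phi_shift phi (card ((C \<union> D) \<inter> (A \<union> B)) - card X) (S - ((C \<union> D) \<inter> (A \<union> B)))
           ((C \<union> D) - (A \<union> B)) ((A \<union> B) - (C \<union> D)) x"
proof -
  have e1: "(D - X) \<union> C = (C \<union> D) - X" using X CD by auto
  have e2: "A \<union> (B - X) = (A \<union> B) - X" using X AB by auto
  show ?thesis unfolding e1 e2
    by (rule shiftG[OF inf FB SO fin]) (use sub X x in auto)
qed

lemma termR:
  assumes inf: "infinite (UNIV :: 'a set)"
    and FB: "FB_module s M act" and SO: "symmetric_operation s M act phi"
    and fin: "finite (S :: 'a set)" and sub: "A \<subseteq> S" "B \<subseteq> S" "C \<subseteq> S" "D \<subseteq> S"
    and AB: "A \<inter> B = {}" and CD: "C \<inter> D = {}"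
    and X: "X \<subseteq> A \<inter> C" and x: "x \<in> M (S - (A \<union> B))"
  shows "phi (S - X) ((C - X) \<union> D) (B \<union> (A - X)) x
       = phi_shift phi (card ((C \<union> D) \<inter> (A \<union> B)) - card X) (S - ((C \<union> D) \<inter> (A \<union> B)))
           ((C \<union> D) - (A \<union> B)) ((A \<union> B) - (C \<union> D)) x"
proof -
  have e1: "(C - X) \<union> D = (C \<union> D) - X" using X CD by auto
  have e2: "B \<union> (A - X) = (A \<union> B) - X" using X AB by auto
  show ?thesis unfolding e1 e2
    by (rule shiftG[OF inf FB SO fin]) (use sub X x in auto)
qed

lemma side_zero:
  fixes H :: "nat \<Rightarrow> 'v::ab_group_add"
  assumes neg: "\<And>k. k \<ge> 1 \<Longrightarrow> H (k + 1) = - H k"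
    and finI: "finite I" and P: "P \<subseteq> I" "p \<in> P" and a: "a \<in> I" "a \<notin> P"
  shows "(\<Sum>X\<in>Pow P. H (card I - card X)) = 0"
proof (rule sum_pairs_zero)
  show "finite P" by (rule finite_subset[OF P(1) finI])
  show "p \<in> P" by fact
  fix X assume X: "X \<subseteq> P - {p}"
  have finX: "finite X" by (rule finite_subset[OF _ finI]) (use X P in auto)
  have pX: "p \<notin> X" using X by auto
  have aX: "a \<notin> insert p X" using X a P by auto
  have "insert a (insert p X) \<subseteq> I" using X a P by auto
  then have "card (insert a (insert p X)) \<le> card I" using finI card_mono by blast
  moreover have "card (insert a (insert p X)) = card X + 2" using finX pX aX by simp
  ultimately have le: "card X + 2 \<le> card I" by simp
  define k where "k = card I - card X - 1"
  have k1: "k \<ge> 1" using le k_def by simp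
  have c1: "card I - card (insert p X) = k" using finX pX le k_def by simp
  have c2: "card I - card X = k + 1" using le k_def by simp
  show "H (card I - card (insert p X)) = - H (card I - card X)"
    unfolding c1 c2 using neg[OF k1] by simp
qed

lemma B3'_iff_neg:
  assumes FB: "FB_module s M act"
  shows "cond_B3' s M phi \<longleftrightarrow>
    (\<forall>k\<ge>1. \<forall>S A B. finite S \<and> A \<subseteq> S \<and> B \<subseteq> S \<and> A \<inter> B = {} \<longrightarrow>
       (\<forall>x \<in> M (S - B). phi_shift phi (k + 1) S A B x = - phi_shift phi k S A B x))"
proof -
  have mod: "module s" using FB unfolding FB_module_def by (elim conjE) assumption
  show ?thesis
  proof
    assume H: "cond_B3' s M phi"
    show "\<forall>k\<ge>1. \<forall>S A B. finite S \<and> A \<subseteq> S \<and> B \<subseteq> S \<and> A \<inter> B = {} \<longrightarrow>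
       (\<forall>x \<in> M (S - B). phi_shift phi (k + 1) S A B x = - phi_shift phi k S A B x)"
    proof (intro allI impI ballI)
      fix k :: nat and S A B x
      assume k: "k \<ge> 1" and c: "finite S \<and> A \<subseteq> S \<and> B \<subseteq> S \<and> A \<inter> B = {}" and x: "x \<in> M (S - B)"
      have h: "\<And>n. n \<ge> 1 \<Longrightarrow> phi_shift phi n S A B x = s ((-1) ^ (n + 1)) (phi_shift phi 1 S A B x)"
        using H[unfolded cond_B3'_def, rule_format, OF _ c x] by blast
      have "phi_shift phi (k + 1) S A B x = s ((-1) ^ (k + 1 + 1)) (phi_shift phi 1 S A B x)"
        by (rule h) (use k in simp)
      also have "(-1) ^ (k + 1 + 1) = - ((-1) ^ (k + 1) :: 'a)" by simp
      also have "s (- ((-1) ^ (k + 1))) (phi_shift phi 1 S A B x)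
          = - s ((-1) ^ (k + 1)) (phi_shift phi 1 S A B x)"
        by (rule module.scale_minus_left[OF mod])
      also have "s ((-1) ^ (k + 1)) (phi_shift phi 1 S A B x) = phi_shift phi k S A B x"
        by (rule h[symmetric]) (use k in simp)
      finally show "phi_shift phi (k + 1) S A B x = - phi_shift phi k S A B x" .
    qed
  next
    assume H: "\<forall>k\<ge>1. \<forall>S A B. finite S \<and> A \<subseteq> S \<and> B \<subseteq> S \<and> A \<inter> B = {} \<longrightarrow>
       (\<forall>x \<in> M (S - B). phi_shift phi (k + 1) S A B x = - phi_shift phi k S A B x)"
    show "cond_B3' s M phi"
      unfolding cond_B3'_def
    proof (intro allI impI ballI)
      fix n :: nat and S A B x
      assume n: "n \<ge> 1" and c: "finite S \<and> A \<subseteq> S \<and> B \<subseteq> S \<and> A \<inter> B = {}" and x: "x \<in> M (S - B)"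
      have step: "\<And>k. k \<ge> 1 \<Longrightarrow> phi_shift phi (k + 1) S A B x = - phi_shift phi k S A B x"
        using H[rule_format, OF _ c x] by blast
      show "phi_shift phi n S A B x = s ((-1) ^ (n + 1)) (phi_shift phi 1 S A B x)"
        using n
      proof (induction n)
        case 0 then show ?case by simp
      next
        case (Suc m)
        show ?case
        proof (cases "m = 0")
          case True
          then show ?thesis using module.scale_one[OF mod] by simp
        next
          case False
          then have m1: "m \<ge> 1" by simp
          have "phi_shift phi (Suc m) S A B x = - phi_shift phi m S A B x"
            using step[OF m1] by simp
          also have "\<dots> = - s ((-1) ^ (m + 1)) (phi_shift phi 1 S A B x)" using Suc.IH[OF m1] by (rule arg_cong)
          also have "\<dots> = s (- ((-1) ^ (m + 1))) (phi_shift phi 1 S A B x)"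
            by (rule module.scale_minus_left[OF mod, symmetric])
          also have "- ((-1) ^ (m + 1)) = ((-1) ^ (Suc m + 1) :: 'a)" by simp
          finally show ?thesis .
        qed
      qed
    qed
  qed
qed

lemma neg_imp_B3:
  assumes inf: "infinite (UNIV :: 'a set)"
    and FB: "FB_module s M act" and SO: "symmetric_operation s M act phi"
    and NEG: "\<forall>k\<ge>1. \<forall>S A B. finite S \<and> A \<subseteq> S \<and> B \<subseteq> S \<and> A \<inter> B = {} \<longrightarrow>
       (\<forall>x \<in> M (S - B). phi_shift phi (k + 1) S A B x = - phi_shift phi k S A B x)"
  shows "cond_B3 M (phi :: 'a set \<Rightarrow> 'a set \<Rightarrow> 'a set \<Rightarrow> 'v::ab_group_add \<Rightarrow> 'v)"
  unfolding cond_B3_def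
proof (intro allI impI ballI)
  fix S A B C D :: "'a set" and x
  assume c: "finite S \<and> A \<subseteq> S \<and> B \<subseteq> S \<and> C \<subseteq> S \<and> D \<subseteq> S \<and> A \<inter> B = {} \<and> C \<inter> D = {}
       \<and> A \<inter> C \<noteq> {} \<and> B \<inter> D \<noteq> {}" and x: "x \<in> M (S - (A \<union> B))"
  from c have fin: "finite S" and sub: "A \<subseteq> S" "B \<subseteq> S" "C \<subseteq> S" "D \<subseteq> S"
    and AB: "A \<inter> B = {}" and CD: "C \<inter> D = {}" and AC: "A \<inter> C \<noteq> {}" and BD: "B \<inter> D \<noteq> {}"
    by auto
  define I where "I = (C \<union> D) \<inter> (A \<union> B)"
  define H where "H m = phi_shift phi m (S - I) ((C \<union> D) - (A \<union> B)) ((A \<union> B) - (C \<union> D)) x" for m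
  have finI: "finite I" by (rule finite_subset[OF _ fin]) (use sub in \<open>auto simp: I_def\<close>)
  have neg: "H (k + 1) = - H k" if "k \<ge> 1" for k
    unfolding H_def
  proof (rule NEG[rule_format, OF that])
    show "finite (S - I) \<and> C \<union> D - (A \<union> B) \<subseteq> S - I \<and> A \<union> B - (C \<union> D) \<subseteq> S - I
        \<and> (C \<union> D - (A \<union> B)) \<inter> (A \<union> B - (C \<union> D)) = {}"
      using fin sub unfolding I_def by auto
    have "S - I - (A \<union> B - (C \<union> D)) = S - (A \<union> B)" unfolding I_def by auto
    then show "x \<in> M (S - I - (A \<union> B - (C \<union> D)))" using x by simp
  qed
  obtain p where p: "p \<in> B \<inter> D" using BD by blast
  obtain a where a: "a \<in> A \<inter> C" using AC by blast
  have L: "(\<Sum>X\<in>Pow (B \<inter> D). phi (S - X) ((D - X) \<union> C) (A \<union> (B - X)) x)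
      = (\<Sum>X\<in>Pow (B \<inter> D). H (card I - card X))"
  proof (rule sum.cong)
    fix X assume "X \<in> Pow (B \<inter> D)"
    then show "phi (S - X) ((D - X) \<union> C) (A \<union> (B - X)) x = H (card I - card X)"
      unfolding H_def I_def using termL[OF inf FB SO fin sub AB CD _ x] by blast
  qed simp
  have R: "(\<Sum>X\<in>Pow (A \<inter> C). phi (S - X) ((C - X) \<union> D) (B \<union> (A - X)) x)
      = (\<Sum>X\<in>Pow (A \<inter> C). H (card I - card X))"
  proof (rule sum.cong)
    fix X assume "X \<in> Pow (A \<inter> C)"
    then show "phi (S - X) ((C - X) \<union> D) (B \<union> (A - X)) x = H (card I - card X)"
      unfolding H_def I_def using termR[OF inf FB SO fin sub AB CD _ x] by blast
  qed simp
  have "(\<Sum>X\<in>Pow (B \<inter> D). H (card I - card X)) = 0"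
    by (rule side_zero[where H=H and I=I and p=p and a=a, OF neg finI]) (use p a AB in \<open>auto simp: I_def\<close>)
  moreover have "(\<Sum>X\<in>Pow (A \<inter> C). H (card I - card X)) = 0"
    by (rule side_zero[where H=H and I=I and p=a and a=p, OF neg finI]) (use p a AB in \<open>auto simp: I_def\<close>)
  ultimately show "(\<Sum>X\<in>Pow (B \<inter> D). phi (S - X) ((D - X) \<union> C) (A \<union> (B - X)) x)
      = (\<Sum>X\<in>Pow (A \<inter> C). phi (S - X) ((C - X) \<union> D) (B \<union> (A - X)) x)"
    using L R by simp
qed

lemma B3_imp_neg:
  assumes inf: "infinite (UNIV :: 'a set)"
    and FB: "FB_module s M act" and SO: "symmetric_operation s M act phi"
    and B3: "cond_B3 M (phi :: 'a set \<Rightarrow> 'a set \<Rightarrow> 'a set \<Rightarrow> 'v::ab_group_add \<Rightarrow> 'v)"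
  shows "\<forall>k\<ge>1. \<forall>S A B. finite S \<and> A \<subseteq> S \<and> B \<subseteq> S \<and> A \<inter> B = {} \<longrightarrow>
       (\<forall>x \<in> M (S - B). phi_shift phi (k + 1) S A B x = - phi_shift phi k S A B x)"
proof (intro allI impI ballI)
  fix k :: nat and S A0 B0 :: "'a set" and x
  assume k: "k \<ge> 1" and c: "finite S \<and> A0 \<subseteq> S \<and> B0 \<subseteq> S \<and> A0 \<inter> B0 = {}" and x: "x \<in> M (S - B0)"
  from c have fin: "finite S" and A0: "A0 \<subseteq> S" and B0: "B0 \<subseteq> S" and AB0: "A0 \<inter> B0 = {}" by auto
  define F where "F = fresh_set S (k + 2)"
  have Fp: "finite F" "card F = k + 2" "S \<inter> F = {}"
    using fresh_set_prop[OF inf fin, of "k + 2"] unfolding F_def by auto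
  have "F \<noteq> {}" using Fp(2) by auto
  then obtain p where p: "p \<in> F" by blast
  have "card (F - {p}) = k + 1" using Fp p by simp
  then have "F - {p} \<noteq> {}" by (metis card.empty add_is_0 one_neq_zero)
  then obtain q1 where q1: "q1 \<in> F - {p}" by blast
  have "card (F - {p} - {q1}) = k" using Fp p q1 by simp
  then have "F - {p} - {q1} \<noteq> {}" using k by (metis card.empty not_one_le_zero)
  then obtain q2 where q2: "q2 \<in> F - {p} - {q1}" by blast
  define E where "E = F - {p, q1, q2}"
  define SS where "SS = S \<union> F"
  define A where "A = insert p (E \<union> B0)"
  define B where "B = {q1, q2}"
  define C where "C = insert p A0"
  define D where "D = {q1, q2} \<union> E"
  have FE: "F = {p, q1, q2} \<union> E" using p q1 q2 unfolding E_def by auto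
  have finSS: "finite SS" using fin Fp unfolding SS_def by simp
  have cond: "finite SS \<and> A \<subseteq> SS \<and> B \<subseteq> SS \<and> C \<subseteq> SS \<and> D \<subseteq> SS \<and> A \<inter> B = {} \<and> C \<inter> D = {}
       \<and> A \<inter> C \<noteq> {} \<and> B \<inter> D \<noteq> {}"
    using finSS A0 B0 Fp(3) p q1 q2 AB0 unfolding SS_def A_def B_def C_def D_def E_def by auto
  have xS: "x \<in> M (SS - (A \<union> B))"
  proof -
    have "SS - (A \<union> B) = S - B0" using Fp(3) B0 FE unfolding SS_def A_def B_def by auto
    then show ?thesis using x by simp
  qed
  have eq: "(\<Sum>X\<in>Pow (B \<inter> D). phi (SS - X) ((D - X) \<union> C) (A \<union> (B - X)) x)
        = (\<Sum>X\<in>Pow (A \<inter> C). phi (SS - X) ((C - X) \<union> D) (B \<union> (A - X)) x)"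
    using B3[unfolded cond_B3_def, rule_format, OF cond xS] .
  from cond have sub: "A \<subseteq> SS" "B \<subseteq> SS" "C \<subseteq> SS" "D \<subseteq> SS" and AB: "A \<inter> B = {}" and CD: "C \<inter> D = {}"
    by auto
  define h where "h m = phi_shift phi m S A0 B0 x" for m
  have I: "(C \<union> D) \<inter> (A \<union> B) = F" using Fp(3) A0 B0 AB0 FE unfolding A_def B_def C_def D_def by auto
  have S0: "SS - F = S" using Fp(3) unfolding SS_def by auto
  have U0: "(C \<union> D) - (A \<union> B) = A0" using Fp(3) A0 B0 AB0 FE unfolding A_def B_def C_def D_def by auto
  have V0: "(A \<union> B) - (C \<union> D) = B0" using Fp(3) A0 B0 AB0 FE unfolding A_def B_def C_def D_def by auto
  have L: "(\<Sum>X\<in>Pow (B \<inter> D). phi (SS - X) ((D - X) \<union> C) (A \<union> (B - X)) x)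
      = (\<Sum>X\<in>Pow (B \<inter> D). h (k + 2 - card X))"
  proof (rule sum.cong)
    fix X assume "X \<in> Pow (B \<inter> D)"
    then show "phi (SS - X) ((D - X) \<union> C) (A \<union> (B - X)) x = h (k + 2 - card X)"
      using termL[OF inf FB SO finSS sub AB CD _ xS, of X] unfolding h_def I S0 U0 V0 Fp(2) by blast
  qed simp
  have R: "(\<Sum>X\<in>Pow (A \<inter> C). phi (SS - X) ((C - X) \<union> D) (B \<union> (A - X)) x)
      = (\<Sum>X\<in>Pow (A \<inter> C). h (k + 2 - card X))"
  proof (rule sum.cong)
    fix X assume "X \<in> Pow (A \<inter> C)"
    then show "phi (SS - X) ((C - X) \<union> D) (B \<union> (A - X)) x = h (k + 2 - card X)"
      using termR[OF inf FB SO finSS sub AB CD _ xS, of X] unfolding h_def I S0 U0 V0 Fp(2) by blast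
  qed simp
  have BD: "B \<inter> D = {q1, q2}" unfolding B_def D_def by auto
  have ACe: "A \<inter> C = {p}" using Fp(3) A0 B0 AB0 p q1 q2 unfolding A_def C_def E_def by auto
  have q12: "q1 \<noteq> q2" using q2 by auto
  have PowBD: "Pow {q1, q2} = {{}, {q1}, {q2}, {q1, q2}}" by (auto simp: Pow_insert)
  have sL: "(\<Sum>X\<in>Pow (B \<inter> D). h (k + 2 - card X)) = h (k + 2) + (h (k + 1) + (h (k + 1) + h k))"
    unfolding BD PowBD using q12 by (simp add: eval_nat_numeral)
  have sR: "(\<Sum>X\<in>Pow (A \<inter> C). h (k + 2 - card X)) = h (k + 2) + h (k + 1)"
    unfolding ACe by (simp add: Pow_insert eval_nat_numeral)
  have "h (k + 2) + (h (k + 1) + (h (k + 1) + h k)) = h (k + 2) + h (k + 1)"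
    using eq L R sL sR by simp
  then have "h (k + 1) + h k = 0" by (simp add: add.assoc[symmetric])
  then show "phi_shift phi (k + 1) S A0 B0 x = - phi_shift phi k S A0 B0 x"
    unfolding h_def by (simp add: eq_neg_iff_add_eq_0)
qed

theorem proposition7p5:
  fixes s :: "'k::comm_ring_1 \<Rightarrow> 'v::ab_group_add \<Rightarrow> 'v"
    and M :: "'a set \<Rightarrow> 'v set"
    and act :: "('a \<Rightarrow> 'a) \<Rightarrow> 'a set \<Rightarrow> 'v \<Rightarrow> 'v"
    and phi :: "'a set \<Rightarrow> 'a set \<Rightarrow> 'a set \<Rightarrow> 'v \<Rightarrow> 'v"
  assumes "infinite (UNIV :: 'a set)"
    and "FB_module s M act"
    and "symmetric_operation s M act phi"
  shows "cond_B3 M phi \<longleftrightarrow> cond_B3' s M phi"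
  unfolding B3'_iff_neg[OF assms(2)]
  using B3_imp_neg[OF assms] neg_imp_B3[OF assms] by blast

end
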